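(* Let $k$ be an odd positive integer, $s>0$ an integer and $t$ an integer. Then $$\eta_{k}(t;s)=\frac{1}{2}\sum_{j=0}^{k-1}(-1)^{j}\,\eta_{k}(t-js;s+1).$$
   Context: For positive integers $k,s$ and integer $t$, $\eta_{k}(t;s)=\frac{1}{k}\sum_{j=0}^{k-1}(1+\alpha^{j})(1+\alpha^{2j})\cdots (1+\alpha^{(s-1)j})\,\alpha^{-jt}$, where $\alpha=e^{2\pi i/k}$ (the empty product for $s=1$ equals $1$). *)

theory Defs
  imports "HOL-Analysis.Analysis"
begin

definition eta :: "nat \<Rightarrow> int \<Rightarrow> nat \<Rightarrow> complex" where
  "eta k t s = (let \<alpha> = exp (2 * pi * \<i> / of_nat k) in
     (1 / of_nat k) * (\<Sum>j = 0..<k. (\<Prod>i = 1..<s. (1 + \<alpha> ^ (i * j))) * \<alpha> powi (- (int j * t))))"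

end

theory Submission
  imports Defs
begin

lemma geo_aux: "(1 - (x::complex)) * (\<Sum>m<n. x ^ m) = 1 - x ^ n"
  by (simp add: one_diff_power_eq)

lemma alt_sum:
  fixes \<beta> :: complex
  assumes "odd k" "\<beta> ^ k = 1"
  shows "(1 + \<beta>) * (\<Sum>m = 0..<k. (-1) ^ m * \<beta> ^ m) = 2"
proof -
  have "(\<Sum>m = 0..<k. (-1) ^ m * \<beta> ^ m) = (\<Sum>m<k. (-\<beta>) ^ m)"
    by (simp add: atLeast0LessThan power_minus')
  moreover have "(1 + \<beta>) * (\<Sum>m<k. (-\<beta>) ^ m) = 1 - (-\<beta>) ^ k"
    using geo_aux[of "-\<beta>" k] by simp
  moreover have "(-\<beta>) ^ k = -1" using assms by (simp add: power_minus_odd)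
  ultimately show ?thesis by simp
qed

theorem theorem3p6:
  fixes k s :: nat and t :: int
  assumes "odd k" and "k > 0" and "s > 0"
  shows "eta k t s = (1/2) * (\<Sum>j = 0..<k. (-1) ^ j * eta k (t - int j * int s) (s + 1))"
proof -
  define \<alpha> where "\<alpha> = exp (2 * pi * \<i> / of_nat k)"
  define P where "P j = (\<Prod>i = 1..<s. (1 + \<alpha> ^ (i * j)))" for j
  have a0: "\<alpha> \<noteq> 0" unfolding \<alpha>_def by simp
  have ak: "\<alpha> ^ k = 1"
  proof -
    have "\<alpha> ^ k = exp (of_nat k * (2 * pi * \<i> / of_nat k))"
      unfolding \<alpha>_def by (rule exp_of_nat_mult[symmetric])
    also have "\<dots> = exp (2 * pi * \<i>)" using assms(2) by simp
    finally show ?thesis by simp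
  qed
  have P1: "(\<Prod>i = 1..<s+1. (1 + \<alpha> ^ (i * j))) = P j * (1 + \<alpha> ^ (s * j))" for j
    unfolding P_def using assms(3) by (simp add: prod.atLeastLessThan_Suc)
  have pw: "\<alpha> powi (- (int j * (t - int m * int s))) = \<alpha> powi (- (int j * t)) * (\<alpha> ^ (s * j)) ^ m" for j m
  proof -
    have "- (int j * (t - int m * int s)) = - (int j * t) + int (s * j * m)" by (simp add: algebra_simps)
    then have "\<alpha> powi (- (int j * (t - int m * int s))) = \<alpha> powi (- (int j * t)) * \<alpha> powi (int (s * j * m))"
      using a0 power_int_add[of \<alpha> "- (int j * t)" "int (s * j * m)"] by simp
    then show ?thesis by (simp only: power_int_of_nat power_mult)
  qed
  have inner: "(\<Sum>m = 0..<k. (-1) ^ m * (\<alpha> ^ (s * j)) ^ m) * (1 + \<alpha> ^ (s * j)) = 2" for j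
  proof -
    have "(\<alpha> ^ (s * j)) ^ k = 1" using ak by (metis power_mult mult.commute power_one)
    from alt_sum[OF assms(1) this] show ?thesis by (simp add: mult.commute)
  qed
  have "(1/2) * (\<Sum>m = 0..<k. (-1) ^ m * eta k (t - int m * int s) (s + 1))
      = (1/2) * (\<Sum>m = 0..<k. (-1) ^ m * ((1 / of_nat k) * (\<Sum>j = 0..<k. P j * (1 + \<alpha> ^ (s * j)) * (\<alpha> powi (- (int j * t)) * (\<alpha> ^ (s * j)) ^ m))))"
    unfolding eta_def Let_def \<alpha>_def[symmetric] P1 pw by simp
  also have "\<dots> = (1 / of_nat k) * (\<Sum>j = 0..<k. P j * \<alpha> powi (- (int j * t)) * ((1/2) * ((\<Sum>m = 0..<k. (-1) ^ m * (\<alpha> ^ (s * j)) ^ m) * (1 + \<alpha> ^ (s * j)))))"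
    apply (simp add: sum_distrib_left sum_distrib_right)
    apply (subst sum.swap)
    apply (rule sum.cong, simp)+
    apply (simp add: algebra_simps)
    done
  also have "\<dots> = (1 / of_nat k) * (\<Sum>j = 0..<k. P j * \<alpha> powi (- (int j * t)))"
    by (simp add: inner)
  also have "\<dots> = eta k t s"
    unfolding eta_def Let_def \<alpha>_def[symmetric] P_def by simp
  finally show ?thesis by simp
qed

end
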